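(* Let $B\ge 2$ and $\eta\in\mathbb{N}$. If $\gamma_B(\eta+1)\geq B^2$, then $\gamma_B(\eta+1)>\gamma_B(\eta)$.
   Context: Fix an integer base $B \geq 2$. Every integer $x>0$ is written uniquely as $x=\sum_{i=0}^{L(x)-1} x_i B^i$ with digits $0 \le x_i \le B-1$ and $x_{L(x)-1}\neq 0$. Define $\mathcal{H}_B(x)=\sum_{i=0}^{L(x)-1} x_i^2$, $\mathcal{H}_B(0)=0$, $\mathcal{H}_B^0(x)=x$, $\mathcal{H}_B^{n}=\mathcal{H}_B\circ\mathcal{H}_B^{n-1}$. A positive integer $x$ is happy if $\mathcal{H}_B^n(x)=1$ for some $n\in\mathbb{N}$; its height is $\eta_B(x)=\min\{\alpha\in\mathbb{N}:\mathcal{H}_B^\alpha(x)=1\}$. For $n\in\mathbb{N}$, $\gamma_B(n)$ denotes the smallest happy number $x\ge 1$ with $\eta_B(x)=n$. *)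

theory Defs
  imports Main
begin

text \<open>Base-B digits of x, least significant first (empty for x = 0).
  The guard B < 2 only serves termination; the paper always has B \<ge> 2.\<close>
function base_digits :: "nat \<Rightarrow> nat \<Rightarrow> nat list" where
  "base_digits B x = (if B < 2 \<or> x = 0 then [] else x mod B # base_digits B (x div B))"
  by auto
termination
  by (relation "measure snd") auto

declare base_digits.simps[simp del]

definition happyH :: "nat \<Rightarrow> nat \<Rightarrow> nat" where
  "happyH B x = sum_list (map (\<lambda>d. d ^ 2) (base_digits B x))"

definition happy :: "nat \<Rightarrow> nat \<Rightarrow> bool" where
  "happy B x \<longleftrightarrow> x > 0 \<and> (\<exists>n. (happyH B ^^ n) x = 1)"

definition happy_height :: "nat \<Rightarrow> nat \<Rightarrow> nat" where
  "happy_height B x = (LEAST a. (happyH B ^^ a) x = 1)"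

definition happy_gamma :: "nat \<Rightarrow> nat \<Rightarrow> nat" where
  "happy_gamma B n = (LEAST x. x \<ge> 1 \<and> happy B x \<and> happy_height B x = n)"

end

theory Submission
  imports Defs
begin

lemma H_step: "B \<ge> 2 \<Longrightarrow> happyH B x = (x mod B)^2 + happyH B (x div B)"
  apply (cases "x = 0")
   apply (simp add: happyH_def base_digits.simps)
  apply (subst happyH_def, subst base_digits.simps)
  apply (simp add: happyH_def)
  done

lemma H0: "happyH B 0 = 0"
  by (simp add: happyH_def base_digits.simps)

lemma H_le: assumes "B \<ge> 2" shows "happyH B q \<le> (B - 1) * q"
proof (induction q rule: less_induct)
  case (less q)
  show ?case
  proof (cases "q = 0")
    case True then show ?thesis by (simp add: H0)
  next
    case False
    have r: "q mod B \<le> B - 1" using assms by (metis Suc_pred' less_Suc_eq_le mod_less_divisor not_numeral_le_zero gr0I le_0_eq)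
    have "(q mod B)^2 \<le> (B-1) * (q mod B)" using r by (simp add: power2_eq_square)
    moreover have "happyH B (q div B) \<le> (B-1) * (q div B)"
      using less False assms by (simp add: div_less_dividend)
    moreover have "(B-1) * (q mod B) + (B-1) * (q div B) \<le> (B-1) * q"
    proof -
      have "q div B \<le> B * (q div B)" using assms by simp
      hence "q mod B + q div B \<le> q" by (metis add.commute add_le_mono1 div_mult_mod_eq mult.commute)
      thus ?thesis by (metis add_mult_distrib2 mult_le_mono2)
    qed
    ultimately show ?thesis using H_step[OF assms, of q] by linarith
  qed
qed

lemma H_less: assumes "B \<ge> 2" "x \<ge> B^2" shows "happyH B x < x"
proof -
  define q where "q = x div B"
  define r where "r = x mod B"
  define q' where "q' = q div B"
  define r' where "r' = q mod B"
  have x: "x = B*q + r" unfolding q_def r_def by simp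
  have q: "q = B*q' + r'" unfolding q'_def r'_def by simp
  have "q \<ge> B" using assms unfolding q_def
    by (metis div_le_mono nonzero_mult_div_cancel_left not_numeral_le_zero power2_eq_square le_0_eq)
  hence q1: "q' \<ge> 1" unfolding q'_def using assms by (metis div_le_mono div_self One_nat_def not_numeral_le_zero le_0_eq)
  have rB: "r < B" "r' < B" unfolding r_def r'_def using assms by auto
  have "happyH B x = r^2 + r'^2 + happyH B q'"
    using H_step[OF assms(1), of x] H_step[OF assms(1), of q] unfolding q_def r_def q'_def r'_def by simp
  also have "\<dots> \<le> r^2 + r'^2 + (B-1)*q'" using H_le[OF assms(1)] by simp
  also have "\<dots> < B*(B*q' + r') + r"
  proof -
    have a: "r'^2 \<le> B * r'" using rB by (simp add: power2_eq_square)
    have b: "r^2 \<le> r + (B-1)*(B-2)"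
    proof (cases r)
      case 0 then show ?thesis by simp
    next
      case (Suc k)
      have "k \<le> B - 2" using rB Suc by simp
      hence "Suc k * k \<le> (B-1)*(B-2)" using rB Suc by (intro mult_mono) auto
      thus ?thesis using Suc by (simp add: power2_eq_square)
    qed
    have c: "(B-1)*(B-2) + (B-1)*q' < B*B*q'"
    proof -
      obtain t where t: "q' = Suc t" using q1 by (cases q') auto
      have e1: "(B-1)*(B-2) + (B-1) < B*B"
      proof -
        have "(B-1)*(B-2) + (B-1) = (B-1)*(B-1)" using assms
          by (cases B; cases "B - 1"; auto simp: algebra_simps)
        also have "\<dots> < B*B" using assms by (intro mult_strict_mono) auto
        finally show ?thesis .
      qed
      have e2: "(B-1)*t \<le> B*B*t" by (intro mult_le_mono1) (metis diff_le_self le_trans le_square)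
      show ?thesis using e1 e2 t by (simp add: algebra_simps)
    qed
    show ?thesis using a b c by (simp add: algebra_simps)
  qed
  also have "\<dots> = x" using x q by simp
  finally show ?thesis .
qed


lemma H_iter0: "(happyH B ^^ n) 0 = 0"
  by (induction n) (auto simp: H0)

lemma happy_step:
  assumes "happy B x" "x \<noteq> 1"
  shows "happy B (happyH B x) \<and> happy_height B x = Suc (happy_height B (happyH B x))"
proof -
  obtain n where n: "(happyH B ^^ n) x = 1" using assms unfolding happy_def by auto
  have "n \<noteq> 0" using n assms by (cases n) auto
  then obtain m where m: "n = Suc m" by (cases n) auto
  have hm: "(happyH B ^^ m) (happyH B x) = 1" using n m by (simp add: funpow_Suc_right del: funpow.simps)
  have pos: "happyH B x > 0"
  proof (rule ccontr)
    assume "\<not> ?thesis" then have "happyH B x = 0" by simp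
    then show False using hm H_iter0[of m B] by simp
  qed
  have "happy_height B x = Suc (LEAST a. (happyH B ^^ Suc a) x = 1)"
    unfolding happy_height_def using n assms by (intro Least_Suc) auto
  also have "(\<lambda>a. (happyH B ^^ Suc a) x) = (\<lambda>a. (happyH B ^^ a) (happyH B x))"
    by (simp add: funpow_Suc_right del: funpow.simps)
  finally show ?thesis using pos hm unfolding happy_def happy_height_def by auto
qed

definition rep :: "nat \<Rightarrow> nat \<Rightarrow> nat" where "rep B k = (\<Sum>i<k. B^i)"

lemma rep_Suc: "rep B (Suc k) = 1 + B * rep B k"
  unfolding rep_def by (simp add: sum_distrib_left lessThan_Suc_eq_insert_0 sum.reindex power_Suc del: lessThan_Suc)

lemma H_rep: assumes "B \<ge> 2" shows "happyH B (rep B k) = k"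
proof (induction k)
  case 0 then show ?case by (simp add: rep_def H0)
next
  case (Suc k)
  have m1: "(1 + B * rep B k) mod B = 1" using assms by (metis mod_mult_self2 add.commute mult.commute mod_less Suc_1 Suc_le_lessD)
  have d1: "(1 + B * rep B k) div B = rep B k" using assms
    by (metis div_mult_self2 add.commute mult.commute div_less Suc_1 Suc_le_lessD add_0 not_numeral_le_zero le_0_eq)
  show ?case using H_step[OF assms, of "1 + B * rep B k"] Suc m1 d1 by (simp add: rep_Suc)
qed

lemma rep_pos: "k > 0 \<Longrightarrow> rep B k > 0"
  by (cases k) (auto simp: rep_Suc)

lemma exists_height: assumes "B \<ge> 2" shows "\<exists>x. happy B x \<and> happy_height B x = n"
proof (induction n)
  case 0
  have "happy B 1" unfolding happy_def by (auto intro: exI[of _ 0])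
  moreover have "happy_height B 1 = 0" unfolding happy_height_def by simp
  ultimately show ?case by blast
next
  case (Suc n)
  then obtain y where y: "happy B y" "happy_height B y = n" by blast
  define x where "x = B * rep B y"
  have yp: "y > 0" using y unfolding happy_def by simp
  have rp: "rep B y > 0" using rep_pos[OF yp] .
  have Hx: "happyH B x = y" using H_step[OF assms, of x] H_rep[OF assms, of y] assms
    unfolding x_def by simp
  have x1: "x \<noteq> 1" using rp assms unfolding x_def
    by (metis nat_1_eq_mult_iff numeral_le_one_iff semiring_norm(69))
  obtain m where m: "(happyH B ^^ m) y = 1" using y unfolding happy_def by auto
  have hx: "happy B x" unfolding happy_def
  proof
    show "x > 0" using rp assms unfolding x_def by simp
    show "\<exists>n. (happyH B ^^ n) x = 1" using m Hx
      by (intro exI[of _ "Suc m"]) (simp add: funpow_Suc_right del: funpow.simps)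
  qed
  have "happy_height B x = Suc n" using happy_step[OF hx x1] Hx y by simp
  then show ?case using hx by blast
qed

theorem lemma2p2:
  fixes B \<eta> :: nat
  assumes "B \<ge> 2"
    and "happy_gamma B (\<eta> + 1) \<ge> B ^ 2"
  shows "happy_gamma B (\<eta> + 1) > happy_gamma B \<eta>"
proof -
  let ?P = "\<lambda>n x. x \<ge> 1 \<and> happy B x \<and> happy_height B x = n"
  obtain z where "happy B z" "happy_height B z = \<eta> + 1" using exists_height[OF assms(1)] by blast
  hence "?P (\<eta>+1) z" unfolding happy_def by simp
  hence P: "?P (\<eta>+1) (happy_gamma B (\<eta>+1))" unfolding happy_gamma_def by (rule LeastI)
  define x where "x = happy_gamma B (\<eta>+1)"
  have x1: "x \<noteq> 1" using assms unfolding x_def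
    by (metis one_le_numeral not_less_eq_eq numeral_le_one_iff power_increasing power_one_right
        semiring_norm(69) le_trans one_le_power)
  have st: "happy B (happyH B x) \<and> happy_height B x = Suc (happy_height B (happyH B x))"
    using happy_step[OF _ x1, of B] P unfolding x_def by simp
  hence "?P \<eta> (happyH B x)" using P unfolding x_def happy_def by simp
  hence "happy_gamma B \<eta> \<le> happyH B x" unfolding happy_gamma_def by (rule Least_le)
  also have "\<dots> < x" using H_less[OF assms(1)] assms(2) unfolding x_def by simp
  finally show ?thesis unfolding x_def .
qed

end
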